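(* Let $w\in\mathbb{R}^N_{>0}$ and assume $\mu_i\ge1$ for all $i$. Then $$\min_{x\in\mathbb{R}^N}\Big(\sum_{r\in[R]}f_r(x)+\tfrac12\|x\|_{2,w}^2\Big)=-\min_{y\in\mathcal{B}}\tfrac12\|Ay\|^2_{2,w^{-1}},$$ and the primal minimizer $x^*_w$ satisfies $x^*_w=-w^{-1}\odot Ay$ for every minimizer $y$ of $\|Ay\|^2_{2,w^{-1}}$ over $\mathcal{B}$. Moreover, for every $y\in\mathcal{B}$, $\min_{a\in\mathcal{A}}\|a-y\|^2_{2,I(w^{-1}\odot\mu)}=\|Ay\|^2_{2,w^{-1}}$, so that the problem $\min_{a,y}\|a-y\|^2_{2,I(w^{-1}\odot\mu)}$ subject to $y\in\mathcal{B}$, $a\in\mathcal{A}$ has the same optimal value and optimal $y$'s as $\min_{y\in\mathcal{B}}\|Ay\|^2_{2,w^{-1}}$.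
   Context: $F_r:2^{[N]}\to\mathbb{R}$ ($r\in[R]$) are submodular with $F_r(\emptyset)=0$, base polytopes $\mathcal{B}_r=\{u\in\mathbb{R}^N:\sum_{i\in S}u_i\le F_r(S)\ \forall S,\ \sum_iu_i=F_r([N])\}$ and Lovász extensions $f_r(x)=\max_{u\in\mathcal{B}_r}\langle u,x\rangle$; $\mathcal{B}=\mathcal{B}_1\times\cdots\times\mathcal{B}_R$; $A:(\mathbb{R}^N)^R\to\mathbb{R}^N$, $Ay=\sum_ry_r$. $S_r$ is the set of $i$ with $F_r(S\cup\{i\})\ne F_r(S)$ for some $S\subseteq[N]\setminus\{i\}$; $\mu_i=|\{r:i\in S_r\}|$. $\mathcal{A}=\{a\in(\mathbb{R}^N)^R:Aa=0,\ a_{r,i}=0\text{ whenever }i\notin S_r\}$. Powers ($w^{-1}$) and products ($\odot$) are element-wise. $\|z\|_{2,w}=\sqrt{\sum_iw_iz_i^2}$; $I(v)\in(\mathbb{R}^N)^R$ has all blocks equal to $v$; $\|y\|_{2,\theta}=\sqrt{\sum_r\|y_r\|^2_{2,\theta_r}}$. *)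

theory Defs
  imports Complex_Main
begin

text \<open>Ground set [N] is the finite type 'n, index set [R] is the finite type 'r.
  Vectors in R^N are functions 'n => real; elements of (R^N)^R are 'r => 'n => real.\<close>

definition submodular :: "('n set \<Rightarrow> real) \<Rightarrow> bool" where
  "submodular F \<longleftrightarrow> (\<forall>S T. F (S \<union> T) + F (S \<inter> T) \<le> F S + F T)"

definition base_polytope :: "('n::finite set \<Rightarrow> real) \<Rightarrow> ('n \<Rightarrow> real) set" where
  "base_polytope F = {u. (\<forall>S. (\<Sum>i\<in>S. u i) \<le> F S) \<and> (\<Sum>i\<in>UNIV. u i) = F UNIV}"

definition inner_vec :: "('n::finite \<Rightarrow> real) \<Rightarrow> ('n \<Rightarrow> real) \<Rightarrow> real" where
  "inner_vec u x = (\<Sum>i\<in>UNIV. u i * x i)"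

text \<open>Lovasz extension f(x) = max over the base polytope of <u,x> (written as Sup; attained).\<close>
definition lovasz :: "('n::finite set \<Rightarrow> real) \<Rightarrow> ('n \<Rightarrow> real) \<Rightarrow> real" where
  "lovasz F x = Sup ((\<lambda>u. inner_vec u x) ` base_polytope F)"

definition prod_base :: "('r \<Rightarrow> 'n::finite set \<Rightarrow> real) \<Rightarrow> ('r \<Rightarrow> 'n \<Rightarrow> real) set" where
  "prod_base F = {y. \<forall>r. y r \<in> base_polytope (F r)}"

definition Aop :: "('r::finite \<Rightarrow> 'n \<Rightarrow> real) \<Rightarrow> ('n \<Rightarrow> real)" where
  "Aop y = (\<lambda>i. \<Sum>r\<in>UNIV. y r i)"

definition incident :: "('n set \<Rightarrow> real) \<Rightarrow> 'n set" where
  "incident F = {i. \<exists>S. i \<notin> S \<and> F (insert i S) \<noteq> F S}"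

definition mu :: "('r::finite \<Rightarrow> 'n set \<Rightarrow> real) \<Rightarrow> 'n \<Rightarrow> nat" where
  "mu F i = card {r. i \<in> incident (F r)}"

definition Aset :: "('r::finite \<Rightarrow> 'n set \<Rightarrow> real) \<Rightarrow> ('r \<Rightarrow> 'n \<Rightarrow> real) set" where
  "Aset F = {a. Aop a = (\<lambda>i. 0) \<and> (\<forall>r i. i \<notin> incident (F r) \<longrightarrow> a r i = 0)}"

definition wnorm2 :: "('n::finite \<Rightarrow> real) \<Rightarrow> ('n \<Rightarrow> real) \<Rightarrow> real" where
  "wnorm2 w z = (\<Sum>i\<in>UNIV. w i * (z i)\<^sup>2)"

definition bnorm2 :: "('r::finite \<Rightarrow> 'n::finite \<Rightarrow> real) \<Rightarrow> ('r \<Rightarrow> 'n \<Rightarrow> real) \<Rightarrow> real" where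
  "bnorm2 \<theta> y = (\<Sum>r\<in>UNIV. wnorm2 (\<theta> r) (y r))"

definition Ivec :: "('n \<Rightarrow> real) \<Rightarrow> ('r \<Rightarrow> 'n \<Rightarrow> real)" where
  "Ivec v = (\<lambda>r. v)"

end

theory Submission
  imports Defs "HOL-Analysis.Analysis"
begin


lemma greedy_aux:
  assumes sm: "submodular F" and e: "F {} = 0" and fin: "finite U"
  shows "\<exists>u. (\<forall>S\<subseteq>U. (\<Sum>i\<in>S. u i) \<le> F S) \<and> (\<Sum>i\<in>U. u i) = (F U :: real)"
  using fin
proof (induction U rule: finite_induct)
  case empty
  then show ?case using e by auto
next
  case (insert e U)
  then obtain u where u1: "\<forall>S\<subseteq>U. (\<Sum>i\<in>S. u i) \<le> F S" and u2: "(\<Sum>i\<in>U. u i) = F U" by blast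
  define v where "v = u(e := F (insert e U) - F U)"
  have vU: "\<And>S. S \<subseteq> U \<Longrightarrow> (\<Sum>i\<in>S. v i) = (\<Sum>i\<in>S. u i)"
    using insert.hyps(2) unfolding v_def by (intro sum.cong) auto
  have "\<forall>S\<subseteq>insert e U. (\<Sum>i\<in>S. v i) \<le> F S"
  proof (intro allI impI)
    fix S assume S: "S \<subseteq> insert e U"
    show "(\<Sum>i\<in>S. v i) \<le> F S"
    proof (cases "e \<in> S")
      case False
      then have "S \<subseteq> U" using S by auto
      then show ?thesis using vU u1 by auto
    next
      case True
      define T where "T = S - {e}"
      have T: "T \<subseteq> U" "S = insert e T" "e \<notin> T" using S True unfolding T_def by auto
      have finT: "finite T" using T(1) insert.hyps(1) finite_subset by blast
      have "(\<Sum>i\<in>S. v i) = v e + (\<Sum>i\<in>T. v i)" using T finT by simp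
      also have "\<dots> = F (insert e U) - F U + (\<Sum>i\<in>T. u i)" using vU[OF T(1)] by (simp add: v_def)
      also have "\<dots> \<le> F (insert e U) - F U + F T" using u1 T(1) by auto
      also have "\<dots> \<le> F S"
      proof -
        have e1: "S \<union> U = insert e U" "S \<inter> U = T" using T insert.hyps(2) by auto
        have "F (S \<union> U) + F (S \<inter> U) \<le> F S + F U" using sm unfolding submodular_def by blast
        then show ?thesis unfolding e1 by linarith
      qed
      finally show ?thesis .
    qed
  qed
  moreover have "(\<Sum>i\<in>insert e U. v i) = F (insert e U)"
    using insert.hyps vU[of U] u2 by (simp add: v_def)
  ultimately show ?case by blast
qed

lemma base_nonempty:
  assumes "submodular (F :: 'n::finite set \<Rightarrow> real)" "F {} = 0"
  shows "base_polytope F \<noteq> {}"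
  using greedy_aux[OF assms, of UNIV] unfolding base_polytope_def by auto

lemma base_bounds:
  assumes "u \<in> base_polytope (F :: 'n::finite set \<Rightarrow> real)"
  shows "F UNIV - F (- {i}) \<le> u i" "u i \<le> F {i}"
proof -
  have s: "(\<Sum>j\<in>S. u j) \<le> F S" for S using assms unfolding base_polytope_def by auto
  have t: "(\<Sum>j\<in>UNIV. u j) = F UNIV" using assms unfolding base_polytope_def by auto
  show "u i \<le> F {i}" using s[of "{i}"] by simp
  have "(\<Sum>j\<in>UNIV. u j) = u i + (\<Sum>j\<in>UNIV - {i}. u j)" by (simp add: sum.remove)
  moreover have "UNIV - {i} = - {i}" by auto
  ultimately show "F UNIV - F (- {i}) \<le> u i" using s[of "- {i}"] t by auto
qed

lemma compact_box1:
  "compact (PiE UNIV (\<lambda>i::'n. {lo i..hi i::real}))"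
proof -
  have "compactin (product_topology (\<lambda>_. euclidean) UNIV) (PiE UNIV (\<lambda>i::'n. {lo i..hi i::real}))"
    by (subst compactin_PiE) auto
  then show ?thesis by (simp add: euclidean_product_topology)
qed

lemma compact_box:
  "compact {y :: 'r \<Rightarrow> 'n \<Rightarrow> real. \<forall>r i. lo r i \<le> y r i \<and> y r i \<le> hi r i}"
proof -
  have "compactin (product_topology (\<lambda>_. euclidean) UNIV) (PiE UNIV (\<lambda>r. PiE UNIV (\<lambda>i::'n. {lo r i..hi r i::real})))"
    by (subst compactin_PiE) (auto simp: compact_box1)
  then have "compact (PiE UNIV (\<lambda>r. PiE UNIV (\<lambda>i::'n. {lo r i..hi r i::real})))"
    by (simp add: euclidean_product_topology)
  moreover have "PiE UNIV (\<lambda>r. PiE UNIV (\<lambda>i::'n. {lo r i..hi r i::real})) = {y :: 'r \<Rightarrow> 'n \<Rightarrow> real. \<forall>r i. lo r i \<le> y r i \<and> y r i \<le> hi r i}"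
    by (auto simp: PiE_UNIV_domain Pi_iff)
  ultimately show ?thesis by simp
qed

lemma cont_coord: "continuous_on UNIV (\<lambda>y::'r \<Rightarrow> 'n \<Rightarrow> real. y r i)"
  by (rule continuous_on_product_then_coordinatewise[OF continuous_on_product_coordinates])

lemma cont_sum: "continuous_on UNIV (\<lambda>y::'r \<Rightarrow> 'n \<Rightarrow> real. \<Sum>i\<in>S. y r i)"
  by (intro continuous_on_sum cont_coord)

lemma prod_base_closed: "closed (prod_base (F :: 'r \<Rightarrow> 'n::finite set \<Rightarrow> real))"
proof -
  have eq: "prod_base F = (\<Inter>r. \<Inter>S. {y. (\<Sum>i\<in>S. y r i) \<le> F r S}) \<inter> (\<Inter>r. {y. (\<Sum>i\<in>UNIV. y r i) = F r UNIV})"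
    unfolding prod_base_def base_polytope_def by auto
  have c1: "closed {y. (\<Sum>i\<in>S. y r i) \<le> F r S}" for r S
    by (rule closed_Collect_le[OF cont_sum continuous_on_const])
  have c2: "closed {y. (\<Sum>i\<in>UNIV. y r i) = F r UNIV}" for r
    by (rule closed_Collect_eq[OF cont_sum continuous_on_const])
  show ?thesis unfolding eq by (intro closed_Int closed_INT ballI c1 c2)
qed

lemma prod_base_compact: "compact (prod_base (F :: 'r \<Rightarrow> 'n::finite set \<Rightarrow> real))"
proof -
  let ?B = "{y :: 'r \<Rightarrow> 'n \<Rightarrow> real. \<forall>r i. F r UNIV - F r (- {i}) \<le> y r i \<and> y r i \<le> F r {i}}"
  have "prod_base F = prod_base F \<inter> ?B"
    unfolding prod_base_def using base_bounds by blast
  moreover have "compact (prod_base F \<inter> ?B)"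
    by (rule closed_Int_compact[OF prod_base_closed compact_box])
  ultimately show ?thesis by simp
qed

lemma lovasz_bdd:
  fixes F :: "'n::finite set \<Rightarrow> real"
  shows "bdd_above ((\<lambda>u. inner_vec u x) ` base_polytope F)"
proof -
  let ?M = "\<Sum>i\<in>UNIV. (\<bar>F UNIV - F (- {i})\<bar> + \<bar>F {i}\<bar>) * \<bar>x i\<bar>"
  have "inner_vec u x \<le> ?M" if u: "u \<in> base_polytope F" for u
  proof -
    have *: "u i * x i \<le> (\<bar>F UNIV - F (- {i})\<bar> + \<bar>F {i}\<bar>) * \<bar>x i\<bar>" for i
    proof -
      have "\<bar>u i\<bar> \<le> \<bar>F UNIV - F (- {i})\<bar> + \<bar>F {i}\<bar>" using base_bounds[OF u, of i] by linarith
      then have "\<bar>u i\<bar> * \<bar>x i\<bar> \<le> (\<bar>F UNIV - F (- {i})\<bar> + \<bar>F {i}\<bar>) * \<bar>x i\<bar>"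
        by (intro mult_right_mono) auto
      moreover have "u i * x i \<le> \<bar>u i\<bar> * \<bar>x i\<bar>" by (metis abs_ge_self abs_mult)
      ultimately show ?thesis by linarith
    qed
    have "(\<Sum>i\<in>UNIV. u i * x i) \<le> ?M" by (rule sum_mono) (rule *)
    then show ?thesis by (simp add: Defs.inner_vec_def)
  qed
  then show ?thesis by (meson bdd_aboveI2)
qed

lemma lovasz_ge:
  assumes "u \<in> base_polytope (F :: 'n::finite set \<Rightarrow> real)"
  shows "inner_vec u x \<le> lovasz F x"
  unfolding lovasz_def using assms lovasz_bdd by (intro cSup_upper) auto

lemma lovasz_eq:
  assumes "u \<in> base_polytope (F :: 'n::finite set \<Rightarrow> real)"
    and "\<forall>v\<in>base_polytope F. inner_vec v x \<le> inner_vec u x"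
  shows "lovasz F x = inner_vec u x"
  unfolding lovasz_def using assms by (intro cSup_eq_maximum) auto



lemma sum_inner_Aop:
  "(\<Sum>r\<in>UNIV. inner_vec (y r) x) = (\<Sum>i\<in>UNIV. Aop (y::'r::finite \<Rightarrow> 'n::finite \<Rightarrow> real) i * x i)"
  unfolding Defs.inner_vec_def Aop_def
  by (subst sum.swap) (simp add: sum_distrib_right)

lemma ident:
  fixes w :: "'n::finite \<Rightarrow> real" and y :: "'r::finite \<Rightarrow> 'n \<Rightarrow> real"
  assumes wpos: "\<And>i. w i > 0"
  shows "(\<Sum>r\<in>UNIV. inner_vec (y r) x) + 1/2 * wnorm2 w x
    = - (1/2) * wnorm2 (\<lambda>i. inverse (w i)) (Aop y) + 1/2 * wnorm2 w (\<lambda>i. x i - (- inverse (w i) * Aop y i))"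
proof -
  have pt: "Aop y i * x i + 1/2 * (w i * (x i)\<^sup>2) = - (1/2) * (inverse (w i) * (Aop y i)\<^sup>2) + 1/2 * (w i * (x i - (- inverse (w i) * Aop y i))\<^sup>2)" for i
    using wpos[of i] by (simp add: field_simps power2_eq_square)
  have "(\<Sum>r\<in>UNIV. inner_vec (y r) x) + 1/2 * wnorm2 w x = (\<Sum>i\<in>UNIV. Aop y i * x i + 1/2 * (w i * (x i)\<^sup>2))"
    by (simp only: sum_inner_Aop wnorm2_def sum.distrib sum_distrib_left)
  also have "\<dots> = (\<Sum>i\<in>UNIV. - (1/2) * (inverse (w i) * (Aop y i)\<^sup>2) + 1/2 * (w i * (x i - (- inverse (w i) * Aop y i))\<^sup>2))"
    by (rule sum.cong[OF refl pt])
  also have "\<dots> = - (1/2) * wnorm2 (\<lambda>i. inverse (w i)) (Aop y) + 1/2 * wnorm2 w (\<lambda>i. x i - (- inverse (w i) * Aop y i))"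
    by (simp only: wnorm2_def sum.distrib sum_distrib_left)
  finally show ?thesis .
qed

lemma wnorm2_nonneg: "(\<And>i. w i > 0) \<Longrightarrow> wnorm2 w z \<ge> 0"
  unfolding wnorm2_def by (intro sum_nonneg) (simp add: less_imp_le)

lemma wnorm2_zero:
  assumes "\<And>i. w i > 0" "wnorm2 w z \<le> 0"
  shows "z = (\<lambda>i. 0)"
proof -
  have nn: "\<forall>i\<in>UNIV. 0 \<le> w i * (z i)\<^sup>2" using assms(1) by (simp add: less_imp_le)
  have "wnorm2 w z = 0" using wnorm2_nonneg[of w z] assms by force
  then have "\<forall>i\<in>UNIV. w i * (z i)\<^sup>2 = 0" using nn unfolding wnorm2_def by (simp add: sum_nonneg_eq_0_iff)
  then show ?thesis using assms(1) by (intro ext) (metis UNIV_I less_irrefl mult_eq_0_iff power_eq_0_iff)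
qed



lemma quad_lemma:
  fixes L Q :: real
  assumes "Q \<ge> 0" "\<And>t. 0 < t \<Longrightarrow> t \<le> 1 \<Longrightarrow> 0 \<le> 2 * t * L + t\<^sup>2 * Q"
  shows "L \<ge> 0"
proof (rule ccontr)
  assume "\<not> L \<ge> 0"
  then have L: "L < 0" by simp
  define t where "t = min 1 (- L / (Q + 1))"
  have t0: "0 < t" using L assms(1) unfolding t_def by (auto simp: field_simps)
  have t1: "t \<le> 1" unfolding t_def by simp
  have "t \<le> - L / (Q + 1)" unfolding t_def by simp
  then have "t * (Q + 1) \<le> - L" using assms(1) by (simp add: field_simps)
  then have "t * Q \<le> - L" using t0 by (simp add: algebra_simps)
  then have "t * (t * Q) \<le> t * (- L)" using t0 by (intro mult_left_mono) auto
  then have "2 * t * L + t\<^sup>2 * Q \<le> t * L" by (simp add: power2_eq_square algebra_simps)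
  moreover have "t * L < 0" using t0 L by (simp add: mult_pos_neg)
  ultimately show False using assms(2)[OF t0 t1] by linarith
qed

lemma base_convex:
  assumes "u \<in> base_polytope (F :: 'n::finite set \<Rightarrow> real)" "v \<in> base_polytope F" "0 \<le> t" "t \<le> 1"
  shows "(\<lambda>i. u i + t * (v i - u i)) \<in> base_polytope F"
proof -
  have eq: "(\<Sum>i\<in>S. u i + t * (v i - u i)) = (1 - t) * (\<Sum>i\<in>S. u i) + t * (\<Sum>i\<in>S. v i)" for S
    by (simp add: sum.distrib sum_distrib_left sum_subtractf algebra_simps)
  have "(1 - t) * (\<Sum>i\<in>S. u i) + t * (\<Sum>i\<in>S. v i) \<le> (1 - t) * F S + t * F S" for S
    using assms unfolding base_polytope_def
    by (intro add_mono mult_left_mono) auto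
  moreover have "(1 - t) * (\<Sum>i\<in>UNIV. u i) + t * (\<Sum>i\<in>UNIV. v i) = F UNIV"
    using assms unfolding base_polytope_def by (simp add: algebra_simps)
  ultimately show ?thesis unfolding base_polytope_def mem_Collect_eq
    by (simp only: eq) (auto simp: algebra_simps)
qed

lemma foc:
  fixes F :: "'r::finite \<Rightarrow> 'n::finite set \<Rightarrow> real" and w :: "'n \<Rightarrow> real"
  assumes wpos: "\<And>i. w i > 0" and y: "y \<in> prod_base F"
    and ymin: "\<forall>y'\<in>prod_base F. wnorm2 (\<lambda>i. inverse (w i)) (Aop y) \<le> wnorm2 (\<lambda>i. inverse (w i)) (Aop y')"
    and v: "v \<in> base_polytope (F r)"
  shows "inner_vec v (\<lambda>i. - inverse (w i) * Aop y i) \<le> inner_vec (y r) (\<lambda>i. - inverse (w i) * Aop y i)"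
proof -
  define d where "d i = v i - y r i" for i
  define L where "L = (\<Sum>i\<in>UNIV. inverse (w i) * Aop y i * d i)"
  define Q where "Q = (\<Sum>i\<in>UNIV. inverse (w i) * (d i)\<^sup>2)"
  have Q0: "Q \<ge> 0" unfolding Q_def using wpos by (intro sum_nonneg) (simp add: less_imp_le)
  have "0 \<le> 2 * t * L + t\<^sup>2 * Q" if t: "0 < t" "t \<le> 1" for t
  proof -
    define z where "z = (\<lambda>r' i. y r' i + (if r' = r then t * d i else 0))"
    have zin: "z \<in> prod_base F"
      unfolding prod_base_def
    proof (intro CollectI allI)
      fix r'
      show "z r' \<in> base_polytope (F r')"
      proof (cases "r' = r")
        case True
        have "(\<lambda>i. y r i + t * (v i - y r i)) \<in> base_polytope (F r)"
          using y v t by (intro base_convex) (auto simp: prod_base_def)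
        then show ?thesis using True unfolding z_def d_def by simp
      next
        case False
        then show ?thesis using y unfolding z_def prod_base_def by simp
      qed
    qed
    have Az: "Aop z i = Aop y i + t * d i" for i
      unfolding z_def Aop_def by (simp add: sum.distrib)
    have "wnorm2 (\<lambda>i. inverse (w i)) (Aop z) = (\<Sum>i\<in>UNIV. inverse (w i) * (Aop y i)\<^sup>2 + 2 * t * (inverse (w i) * Aop y i * d i) + t\<^sup>2 * (inverse (w i) * (d i)\<^sup>2))"
      unfolding wnorm2_def Az by (intro sum.cong) (auto simp: power2_eq_square algebra_simps)
    also have "\<dots> = wnorm2 (\<lambda>i. inverse (w i)) (Aop y) + 2 * t * L + t\<^sup>2 * Q"
      unfolding wnorm2_def L_def Q_def by (simp add: sum.distrib sum_distrib_left)
    finally show ?thesis using ymin zin by force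
  qed
  then have "L \<ge> 0" using quad_lemma[OF Q0] by blast
  moreover have "inner_vec v (\<lambda>i. - inverse (w i) * Aop y i) - inner_vec (y r) (\<lambda>i. - inverse (w i) * Aop y i) = - L"
    unfolding Defs.inner_vec_def L_def d_def by (simp add: sum_subtractf[symmetric] sum_negf[symmetric] algebra_simps)
  ultimately show ?thesis by linarith
qed



lemma base_nonincident:
  assumes "u \<in> base_polytope (F :: 'n::finite set \<Rightarrow> real)" "i \<notin> incident F" "F {} = 0"
  shows "u i = 0"
proof -
  have h: "\<And>S. i \<notin> S \<Longrightarrow> F (insert i S) = F S" using assms(2) unfolding incident_def by auto
  have F1: "F {i} = 0" using h[of "{}"] assms(3) by simp
  have FU: "F UNIV = F (- {i})" proof - have "insert i (- {i}) = UNIV" by auto then show ?thesis using h[of "- {i}"] by simp qed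
  have s: "(\<Sum>j\<in>S. u j) \<le> F S" for S using assms unfolding base_polytope_def by auto
  have t: "(\<Sum>j\<in>UNIV. u j) = F UNIV" using assms unfolding base_polytope_def by auto
  have A: "u i \<le> 0" using s[of "{i}"] F1 by simp
  have B: "(\<Sum>j\<in>- {i}. u j) \<le> F (- {i})" by (rule s)
  have "UNIV - {i} = - {i}" by auto
  then have C: "(\<Sum>j\<in>UNIV. u j) = u i + (\<Sum>j\<in>- {i}. u j)" by (metis UNIV_I finite sum.remove)
  show ?thesis using A B C t FU by linarith
qed

lemma bnorm2_swap:
  "bnorm2 (Ivec c) z = (\<Sum>i\<in>UNIV. c i * (\<Sum>r\<in>UNIV. (z r i)\<^sup>2))"
  unfolding bnorm2_def Ivec_def wnorm2_def
  by (subst sum.swap) (simp add: sum_distrib_left)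

lemma part5:
  fixes F :: "'r::finite \<Rightarrow> 'n::finite set \<Rightarrow> real" and w :: "'n \<Rightarrow> real"
  assumes wpos: "\<And>i. w i > 0" and y: "y \<in> prod_base F"
    and empty0: "\<And>r. F r {} = 0" and mu_ge: "\<And>i. mu F i \<ge> 1"
  shows "(\<exists>a\<in>Aset F. bnorm2 (Ivec (\<lambda>i. inverse (w i) * real (mu F i))) (\<lambda>r i. a r i - y r i) = wnorm2 (\<lambda>i. inverse (w i)) (Aop y))
     \<and> (\<forall>a\<in>Aset F. wnorm2 (\<lambda>i. inverse (w i)) (Aop y) \<le> bnorm2 (Ivec (\<lambda>i. inverse (w i) * real (mu F i))) (\<lambda>r i. a r i - y r i))"
proof -
  define T where "T i = {r. i \<in> incident (F r)}" for i
  have cardT: "card (T i) = mu F i" for i unfolding T_def mu_def by simp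
  have y0: "y r i = 0" if "r \<notin> T i" for r i
    using y that base_nonincident[of "y r" "F r" i] empty0 unfolding T_def prod_base_def by auto
  have sumT: "(\<Sum>r\<in>UNIV. f r) = (\<Sum>r\<in>T i. f r)" if "\<And>r. r \<notin> T i \<Longrightarrow> f r = 0" for f :: "'r \<Rightarrow> real" and i
    using that by (intro sum.mono_neutral_right) auto
  define a where "a r i = (if r \<in> T i then y r i - Aop y i / real (mu F i) else 0)" for r i
  have m0: "real (mu F i) > 0" for i using mu_ge[of i] by simp
  have aA: "a \<in> Aset F"
  proof -
    have "Aop a i = 0" for i
    proof -
      have "Aop a i = (\<Sum>r\<in>UNIV. a r i)" unfolding Aop_def ..
      also have "\<dots> = (\<Sum>r\<in>T i. a r i)" by (rule sumT) (simp add: a_def)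
      also have "\<dots> = (\<Sum>r\<in>T i. y r i - Aop y i / real (mu F i))" by (rule sum.cong) (auto simp: a_def)
      also have "\<dots> = (\<Sum>r\<in>T i. y r i) - Aop y i"
        using m0[of i] by (simp add: sum_subtractf cardT)
      also have "(\<Sum>r\<in>T i. y r i) = Aop y i"
        unfolding Aop_def by (rule sumT[symmetric]) (rule y0)
      finally show ?thesis by simp
    qed
    moreover have "a r i = 0" if "i \<notin> incident (F r)" for r i using that unfolding a_def T_def by simp
    ultimately show ?thesis unfolding Aset_def by auto
  qed
  have eq: "bnorm2 (Ivec (\<lambda>i. inverse (w i) * real (mu F i))) (\<lambda>r i. a r i - y r i) = wnorm2 (\<lambda>i. inverse (w i)) (Aop y)"
    unfolding bnorm2_swap wnorm2_def
  proof (rule sum.cong[OF refl])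
    fix i
    have "(\<Sum>r\<in>UNIV. (a r i - y r i)\<^sup>2) = (\<Sum>r\<in>T i. (Aop y i / real (mu F i))\<^sup>2)"
      by (subst sumT[where i=i]) (auto simp: a_def y0 power2_eq_square)
    also have "\<dots> = real (mu F i) * (Aop y i / real (mu F i))\<^sup>2" by (simp add: cardT)
    finally show "inverse (w i) * real (mu F i) * (\<Sum>r\<in>UNIV. (a r i - y r i)\<^sup>2) = inverse (w i) * (Aop y i)\<^sup>2"
      using m0[of i] by (simp add: power2_eq_square field_simps)
  qed
  have lb: "wnorm2 (\<lambda>i. inverse (w i)) (Aop y) \<le> bnorm2 (Ivec (\<lambda>i. inverse (w i) * real (mu F i))) (\<lambda>r i. b r i - y r i)"
    if b: "b \<in> Aset F" for b
    unfolding bnorm2_swap wnorm2_def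
  proof (rule sum_mono)
    fix i
    have b0: "b r i = 0" if "r \<notin> T i" for r using b that unfolding Aset_def T_def by auto
    have "(\<Sum>r\<in>UNIV. b r i - y r i) = - Aop y i"
      using b unfolding Aset_def Aop_def by (simp add: sum_subtractf fun_eq_iff)
    moreover have "(\<Sum>r\<in>UNIV. b r i - y r i) = (\<Sum>r\<in>T i. b r i - y r i)"
      by (rule sumT) (simp add: b0 y0)
    moreover have "(\<Sum>r\<in>UNIV. (b r i - y r i)\<^sup>2) = (\<Sum>r\<in>T i. (b r i - y r i)\<^sup>2)"
      by (rule sumT) (simp add: b0 y0)
    ultimately have "(Aop y i)\<^sup>2 \<le> (\<Sum>r\<in>UNIV. (b r i - y r i)\<^sup>2) * real (mu F i)"
      using sum_squared_le_sum_of_squares[of "\<lambda>r. b r i - y r i" "T i"] cardT[of i] by simp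
    then have "inverse (w i) * (Aop y i)\<^sup>2 \<le> inverse (w i) * ((\<Sum>r\<in>UNIV. (b r i - y r i)\<^sup>2) * real (mu F i))"
      using wpos[of i] by (intro mult_left_mono) auto
    then show "inverse (w i) * (Aop y i)\<^sup>2 \<le> inverse (w i) * real (mu F i) * (\<Sum>r\<in>UNIV. (b r i - y r i)\<^sup>2)"
      by (simp add: algebra_simps)
  qed
  show ?thesis using aA eq lb by blast
qed


theorem mainTheorem14:
  fixes F :: "'r::finite \<Rightarrow> 'n::finite set \<Rightarrow> real"
    and w :: "'n \<Rightarrow> real"
  assumes submod: "\<And>r. submodular (F r)"
    and empty0: "\<And>r. F r {} = 0"
    and wpos: "\<And>i. w i > 0"
    and mu_ge: "\<And>i. mu F i \<ge> 1"
  defines "P \<equiv> (\<lambda>x. (\<Sum>r\<in>UNIV. lovasz (F r) x) + 1/2 * wnorm2 w x)"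
    and "D \<equiv> (\<lambda>y. wnorm2 (\<lambda>i. inverse (w i)) (Aop y))"
    and "G \<equiv> (\<lambda>a y. bnorm2 (Ivec (\<lambda>i. inverse (w i) * real (mu F i))) (\<lambda>r i. a r i - y r i))"
  shows
    "(\<exists>x0. \<forall>x. P x0 \<le> P x)
     \<and> (\<exists>y0\<in>prod_base F. \<forall>y\<in>prod_base F. 1/2 * D y0 \<le> 1/2 * D y)
     \<and> (INF x. P x) = - (INF y\<in>prod_base F. 1/2 * D y)
     \<and> (\<forall>x y. (\<forall>x'. P x \<le> P x') \<longrightarrow> y \<in> prod_base F \<longrightarrow> (\<forall>y'\<in>prod_base F. D y \<le> D y')
           \<longrightarrow> x = (\<lambda>i. - inverse (w i) * Aop y i))
     \<and> (\<forall>y\<in>prod_base F. (\<exists>a\<in>Aset F. G a y = D y) \<and> (\<forall>a\<in>Aset F. D y \<le> G a y))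
     \<and> (\<exists>a0\<in>Aset F. \<exists>y0\<in>prod_base F. \<forall>a\<in>Aset F. \<forall>y\<in>prod_base F. G a0 y0 \<le> G a y)
     \<and> (INF ay\<in>Aset F \<times> prod_base F. G (fst ay) (snd ay)) = (INF y\<in>prod_base F. D y)
     \<and> (\<forall>y\<in>prod_base F. (\<exists>a\<in>Aset F. \<forall>a'\<in>Aset F. \<forall>y'\<in>prod_base F. G a y \<le> G a' y')
           \<longleftrightarrow> (\<forall>y'\<in>prod_base F. D y \<le> D y'))"
proof -
  define xy where "xy y = (\<lambda>i. - inverse (w i) * Aop y i)" for y :: "'r \<Rightarrow> 'n \<Rightarrow> real"
  have Bne: "prod_base F \<noteq> {}"
  proof -
    have ex: "\<exists>u. u \<in> base_polytope (F r)" for r using base_nonempty[OF submod empty0] by blast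
    have "(SOME u. u \<in> base_polytope (F r)) \<in> base_polytope (F r)" for r by (rule someI_ex[OF ex])
    then have "(\<lambda>r. SOME u. u \<in> base_polytope (F r)) \<in> prod_base F"
      unfolding prod_base_def by blast
    then show ?thesis by blast
  qed
  have "continuous_on UNIV D"
    unfolding D_def wnorm2_def Aop_def
    by (intro continuous_on_sum continuous_on_mult continuous_on_const continuous_on_power cont_coord)
  then have contD: "continuous_on (prod_base F) D" by (rule continuous_on_subset) simp
  obtain y0 where y0: "y0 \<in> prod_base F" "\<forall>y\<in>prod_base F. D y0 \<le> D y"
    using continuous_attains_inf[OF prod_base_compact Bne contD] by blast
  have weak: "P x \<ge> - (1/2) * D y + 1/2 * wnorm2 w (\<lambda>i. x i - xy y i)" if y: "y \<in> prod_base F" for x y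
  proof -
    have "(\<Sum>r\<in>UNIV. inner_vec (y r) x) \<le> (\<Sum>r\<in>UNIV. lovasz (F r) x)"
      using y unfolding prod_base_def by (intro sum_mono lovasz_ge) auto
    then have "(\<Sum>r\<in>UNIV. inner_vec (y r) x) + 1/2 * wnorm2 w x \<le> P x" unfolding P_def by simp
    then show ?thesis using ident[OF wpos, of y x] unfolding D_def xy_def by simp
  qed
  have attain: "P (xy y) = - (1/2) * D y" if y: "y \<in> prod_base F" and ym: "\<forall>y'\<in>prod_base F. D y \<le> D y'" for y
  proof -
    have "lovasz (F r) (xy y) = inner_vec (y r) (xy y)" for r
    proof (rule lovasz_eq)
      show "y r \<in> base_polytope (F r)" using y unfolding prod_base_def by blast
      show "\<forall>v\<in>base_polytope (F r). inner_vec v (xy y) \<le> inner_vec (y r) (xy y)"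
        unfolding xy_def using foc[OF wpos y ym[unfolded D_def]] by blast
    qed
    then have "P (xy y) = (\<Sum>r\<in>UNIV. inner_vec (y r) (xy y)) + 1/2 * wnorm2 w (xy y)" unfolding P_def by simp
    also have "\<dots> = - (1/2) * D y + 1/2 * wnorm2 w (\<lambda>i. xy y i - (- inverse (w i) * Aop y i))"
      using ident[OF wpos, of y "xy y"] unfolding D_def by simp
    also have "wnorm2 w (\<lambda>i. xy y i - (- inverse (w i) * Aop y i)) = 0"
      unfolding wnorm2_def xy_def by simp
    finally show ?thesis by simp
  qed
  have nn: "wnorm2 w z \<ge> 0" for z using wnorm2_nonneg[OF wpos] .
  have Pmin: "\<forall>x. P (xy y0) \<le> P x"
  proof
    fix x
    have "- (1/2) * D y0 + 1/2 * wnorm2 w (\<lambda>i. x i - xy y0 i) \<le> P x" by (rule weak[OF y0(1)])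
    moreover have "0 \<le> wnorm2 w (\<lambda>i. x i - xy y0 i)" by (rule nn)
    ultimately show "P (xy y0) \<le> P x" using attain[OF y0] by linarith
  qed
  have c1: "\<exists>x0. \<forall>x. P x0 \<le> P x" using Pmin by blast
  have c2: "\<exists>y0\<in>prod_base F. \<forall>y\<in>prod_base F. 1/2 * D y0 \<le> 1/2 * D y" using y0 by auto
  have i1: "(INF x. P x) = P (xy y0)" using Pmin by (intro cInf_eq_minimum) auto
  have i2: "(INF y\<in>prod_base F. 1/2 * D y) = 1/2 * D y0" using y0 by (intro cInf_eq_minimum) auto
  have c3: "(INF x. P x) = - (INF y\<in>prod_base F. 1/2 * D y)" using i1 i2 attain[OF y0] by simp
  have c4: "\<forall>x y. (\<forall>x'. P x \<le> P x') \<longrightarrow> y \<in> prod_base F \<longrightarrow> (\<forall>y'\<in>prod_base F. D y \<le> D y')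
           \<longrightarrow> x = (\<lambda>i. - inverse (w i) * Aop y i)"
  proof (intro allI impI)
    fix x y assume xm: "\<forall>x'. P x \<le> P x'" and y: "y \<in> prod_base F" and ym: "\<forall>y'\<in>prod_base F. D y \<le> D y'"
    have "P x \<le> P (xy y)" using xm by blast
    then have "wnorm2 w (\<lambda>i. x i - xy y i) \<le> 0" using attain[OF y ym] weak[OF y, of x] by simp
    then have "(\<lambda>i. x i - xy y i) = (\<lambda>i. 0)" by (rule wnorm2_zero[OF wpos])
    then show "x = (\<lambda>i. - inverse (w i) * Aop y i)" unfolding xy_def by (metis eq_iff_diff_eq_0)
  qed
  have p5: "(\<exists>a\<in>Aset F. G a y = D y) \<and> (\<forall>a\<in>Aset F. D y \<le> G a y)" if "y \<in> prod_base F" for y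
    unfolding G_def D_def by (rule part5[OF wpos that empty0 mu_ge])
  have c5: "\<forall>y\<in>prod_base F. (\<exists>a\<in>Aset F. G a y = D y) \<and> (\<forall>a\<in>Aset F. D y \<le> G a y)" using p5 by blast
  obtain a0 where a0: "a0 \<in> Aset F" "G a0 y0 = D y0" using p5[OF y0(1)] by blast
  have gmin: "G a0 y0 \<le> G a y" if "a \<in> Aset F" "y \<in> prod_base F" for a y
  proof -
    have "D y0 \<le> D y" using y0(2) that(2) by blast
    also have "D y \<le> G a y" using p5[OF that(2)] that(1) by blast
    finally show ?thesis using a0(2) by simp
  qed
  have c6: "\<exists>a0\<in>Aset F. \<exists>y0\<in>prod_base F. \<forall>a\<in>Aset F. \<forall>y\<in>prod_base F. G a0 y0 \<le> G a y"
    using a0 y0 gmin by blast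
  have c7: "(INF ay\<in>Aset F \<times> prod_base F. G (fst ay) (snd ay)) = (INF y\<in>prod_base F. D y)"
  proof -
    have mem: "G a0 y0 \<in> (\<lambda>ay. G (fst ay) (snd ay)) ` (Aset F \<times> prod_base F)"
      using a0(1) y0(1) by (intro image_eqI[where x="(a0, y0)"]) auto
    have "(INF ay\<in>Aset F \<times> prod_base F. G (fst ay) (snd ay)) = G a0 y0"
      by (rule cInf_eq_minimum[OF mem]) (auto intro: gmin)
    moreover have "(INF y\<in>prod_base F. D y) = D y0" using y0 by (intro cInf_eq_minimum) auto
    ultimately show ?thesis using a0 by simp
  qed
  have c8: "\<forall>y\<in>prod_base F. (\<exists>a\<in>Aset F. \<forall>a'\<in>Aset F. \<forall>y'\<in>prod_base F. G a y \<le> G a' y')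
           \<longleftrightarrow> (\<forall>y'\<in>prod_base F. D y \<le> D y')"
  proof (intro ballI)
    fix y assume y: "y \<in> prod_base F"
    show "(\<exists>a\<in>Aset F. \<forall>a'\<in>Aset F. \<forall>y'\<in>prod_base F. G a y \<le> G a' y') \<longleftrightarrow> (\<forall>y'\<in>prod_base F. D y \<le> D y')"
    proof
      assume "\<exists>a\<in>Aset F. \<forall>a'\<in>Aset F. \<forall>y'\<in>prod_base F. G a y \<le> G a' y'"
      then obtain a where a: "a \<in> Aset F" "\<forall>a'\<in>Aset F. \<forall>y'\<in>prod_base F. G a y \<le> G a' y'" by blast
      show "\<forall>y'\<in>prod_base F. D y \<le> D y'"
      proof
        fix y' assume y': "y' \<in> prod_base F"
        obtain a' where a': "a' \<in> Aset F" "G a' y' = D y'" using p5[OF y'] by blast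
        have "D y \<le> G a y" using p5[OF y] a(1) by blast
        also have "\<dots> \<le> G a' y'" using a(2) a'(1) y' by blast
        finally show "D y \<le> D y'" using a'(2) by simp
      qed
    next
      assume ym: "\<forall>y'\<in>prod_base F. D y \<le> D y'"
      obtain a where a: "a \<in> Aset F" "G a y = D y" using p5[OF y] by blast
      have "\<forall>a'\<in>Aset F. \<forall>y'\<in>prod_base F. G a y \<le> G a' y'"
      proof (intro ballI)
        fix a' y' assume a': "a' \<in> Aset F" and y': "y' \<in> prod_base F"
        have "D y \<le> D y'" using ym y' by blast
        also have "D y' \<le> G a' y'" using p5[OF y'] a' by blast
        finally show "G a y \<le> G a' y'" using a(2) by simp
      qed
      then show "\<exists>a\<in>Aset F. \<forall>a'\<in>Aset F. \<forall>y'\<in>prod_base F. G a y \<le> G a' y'" using a(1) by blast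
    qed
  qed
  show ?thesis using c1 c2 c3 c4 c5 c6 c7 c8 by blast
qed

end
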